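(* Let $X$ be a real Banach space, let $\{T_n:X\rightrightarrows X^*\}_{n\in\mathbb{N}}$ be a sequence of maximal monotone operators of type (D), and let $(\varepsilon_n)_n$ be any sequence of positive numbers converging to zero. Let $T=\liminf T_n$. Then for $(x,x^* )\in X\times X^*$, $(x,x^* )\in T$ if and only if $x=\lim_n x_n$ (in norm), where for each $n$, $x_n\in X$ is a solution of $x^*\in T_n(x_n)+J_{\varepsilon_n}(x_n-x)$.
   Context: Operators are identified with their graphs; $\langle\cdot,\cdot\rangle$ is the duality pairing and $X\subset X^{**}$ canonically. $T:X\rightrightarrows X^*$ is monotone if $\langle x-y,x^*-y^*\rangle\ge0$ for all $(x,x^* ),(y,y^* )\in T$; maximal monotone if not properly contained in another monotone operator. For maximal monotone $T$, $\widetilde T=\{(x^{**},x^* )\in X^{**}\times X^*: \langle x^{**}-y,x^*-y^*\rangle\ge 0\ \forall (y,y^* )\in T\}$; $T$ is of type (D) if each $(x^{**},x^* )\in\widetilde T$ is the weak$^*\times$norm limit of a bounded net in $T$. $J_\varepsilon=\partial_\varepsilon(\tfrac12\|\cdot\|^2)$: $w^*\in J_\varepsilon(y)$ iff $\tfrac12\|y\|^2+\tfrac12\|w^*\|^2\le\langle y,w^*\rangle+\varepsilon$. (For type (D) operators such solutions $x_n$ always exist.) The sequential lower limit is $\liminf T_n=\{(x,x^* ): \exists (y_n,y_n^* )\in T_n,\ (y_n,y_n^* )\to(x,x^* ) \text{ in the norm}\times\text{norm topology}\}$. The equivalence is understood for any choice of solutions $x_n$. *)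

theory Defs
  imports "HOL-Analysis.Analysis"
begin

(* Operators X \<rightrightarrows> Xdual are identified with their graphs, subsets of X \<times> Xdual,
  where the dual Xdual is the space of bounded linear functionals 'a \<Rightarrow>\<^sub>L real
  (with the operator norm). *)

definition monotone_op :: "('a::real_normed_vector \<times> ('a \<Rightarrow>\<^sub>L real)) set \<Rightarrow> bool" where
  "monotone_op T \<longleftrightarrow>
     (\<forall>(x, xs) \<in> T. \<forall>(y, ys) \<in> T. blinfun_apply (xs - ys) (x - y) \<ge> 0)"

definition maximal_monotone :: "('a::real_normed_vector \<times> ('a \<Rightarrow>\<^sub>L real)) set \<Rightarrow> bool" where
  "maximal_monotone T \<longleftrightarrow>
     monotone_op T \<and> (\<forall>S. monotone_op S \<and> T \<subseteq> S \<longrightarrow> S = T)"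

(* The enlargement \<widetilde>T in Xbidual \<times> Xdual; the bidual is ('a \<Rightarrow>\<^sub>L real) \<Rightarrow>\<^sub>L real
  and \<langle>xbb - y, xd - yd\<rangle> = xbb(xd - yd) - (xd - yd)(y) (canonical embedding of y). *)
definition tilde_op :: "('a::real_normed_vector \<times> ('a \<Rightarrow>\<^sub>L real)) set
    \<Rightarrow> ((('a \<Rightarrow>\<^sub>L real) \<Rightarrow>\<^sub>L real) \<times> ('a \<Rightarrow>\<^sub>L real)) set" where
  "tilde_op T = {(xss, xs). \<forall>(y, ys) \<in> T.
       blinfun_apply xss (xs - ys) - blinfun_apply (xs - ys) y \<ge> 0}"

(* Type (D): every element of \<widetilde>T is the weak-star\<times>norm limit of a bounded net in T.
  A net in T is represented by the (proper) filter it induces on X \<times> Xdual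
  (its push-forward), which is eventually in T and eventually norm-bounded. *)
definition type_D :: "('a::real_normed_vector \<times> ('a \<Rightarrow>\<^sub>L real)) set \<Rightarrow> bool" where
  "type_D T \<longleftrightarrow>
     (\<forall>(xss, xs) \<in> tilde_op T.
        \<exists>F :: ('a \<times> ('a \<Rightarrow>\<^sub>L real)) filter. \<exists>M.
          F \<noteq> bot \<and>
          eventually (\<lambda>p. p \<in> T) F \<and>
          eventually (\<lambda>p. norm (fst p) \<le> M \<and> norm (snd p) \<le> M) F \<and>
          (\<forall>\<phi>. ((\<lambda>p. blinfun_apply \<phi> (fst p)) \<longlongrightarrow> blinfun_apply xss \<phi>) F) \<and>
          (snd \<longlongrightarrow> xs) F)"

(* J_\<epsilon>(y) = \<partial>_\<epsilon>(\<frac>12\<parallel>\<cdot>\<parallel>^2)(y). *)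
definition J_eps :: "real \<Rightarrow> 'a::real_normed_vector \<Rightarrow> ('a \<Rightarrow>\<^sub>L real) set" where
  "J_eps \<epsilon> y = {ws. (1/2) * (norm y)^2 + (1/2) * (norm ws)^2 \<le> blinfun_apply ws y + \<epsilon>}"

definition liminf_op :: "(nat \<Rightarrow> ('a::real_normed_vector \<times> ('a \<Rightarrow>\<^sub>L real)) set)
    \<Rightarrow> ('a \<times> ('a \<Rightarrow>\<^sub>L real)) set" where
  "liminf_op T = {(x, xs). \<exists>y ys. (\<forall>n. (y n, ys n) \<in> T n) \<and> y \<longlonglongrightarrow> x \<and> ys \<longlonglongrightarrow> xs}"

end

theory Submission
  imports Defs
begin

lemma realA:
  fixes w d e :: real
  assumes "(1/2)*d^2 + (1/2)*w^2 \<le> w*d + e"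
  shows "w \<le> d + sqrt (2*e)"
proof -
  have "(w-d)^2 \<le> 2*e" using assms by (simp add: power2_eq_square algebra_simps)
  hence "w - d \<le> sqrt (2*e)" by (rule real_le_rsqrt)
  thus ?thesis by simp
qed

lemma realB:
  fixes u w a b e :: real
  assumes "(1/2)*u^2 + (1/2)*w^2 \<le> b*u + b*a + w*a + e"
  shows "u \<le> b + sqrt (2*(a*b + e + b^2/2 + a^2/2))"
proof -
  have "(u-b)^2 + (w-a)^2 \<le> 2*(a*b + e + b^2/2 + a^2/2)"
    using assms by (simp add: power2_eq_square algebra_simps)
  moreover have "0 \<le> (w-a)^2" by simp
  ultimately have "(u-b)^2 \<le> 2*(a*b + e + b^2/2 + a^2/2)" by linarith
  hence "u - b \<le> sqrt (2*(a*b + e + b^2/2 + a^2/2))" by (rule real_le_rsqrt)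
  thus ?thesis by simp
qed

lemma bl_le: "blinfun_apply (f::'a::real_normed_vector \<Rightarrow>\<^sub>L real) v \<le> norm f * norm v"
  using norm_blinfun[of f v] by simp

theorem proposition3p2:
  fixes T :: "nat \<Rightarrow> ('a::banach \<times> ('a \<Rightarrow>\<^sub>L real)) set"
    and \<epsilon> :: "nat \<Rightarrow> real"
    and x :: 'a and xs :: "'a \<Rightarrow>\<^sub>L real"
    and xn :: "nat \<Rightarrow> 'a"
  assumes "\<And>n. maximal_monotone (T n)"
    and "\<And>n. type_D (T n)"
    and "\<And>n. \<epsilon> n > 0"
    and "\<epsilon> \<longlonglongrightarrow> 0"
    and "\<And>n. \<exists>ys. (xn n, ys) \<in> T n \<and> xs - ys \<in> J_eps (\<epsilon> n) (xn n - x)"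
  shows "(x, xs) \<in> liminf_op T \<longleftrightarrow> xn \<longlonglongrightarrow> x"
proof -
  have "\<forall>n. \<exists>ys. (xn n, ys) \<in> T n \<and> xs - ys \<in> J_eps (\<epsilon> n) (xn n - x)"
    using assms(5) by blast
  then have "\<exists>f. \<forall>n. (xn n, f n) \<in> T n \<and> xs - f n \<in> J_eps (\<epsilon> n) (xn n - x)"
    by (rule choice)
  then obtain ys where ys: "\<And>n. (xn n, ys n) \<in> T n \<and> xs - ys n \<in> J_eps (\<epsilon> n) (xn n - x)"
    by blast
  define w where "w n = xs - ys n" for n
  have J: "(1/2)*(norm (xn n - x))^2 + (1/2)*(norm (w n))^2 \<le> blinfun_apply (w n) (xn n - x) + \<epsilon> n" for n
    using ys[of n] unfolding w_def J_eps_def by simp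
  show ?thesis
  proof
    assume "(x, xs) \<in> liminf_op T"
    then obtain y ys' where yy: "\<And>n. (y n, ys' n) \<in> T n" "y \<longlonglongrightarrow> x" "ys' \<longlonglongrightarrow> xs"
      unfolding liminf_op_def by blast
    define a where "a n = norm (y n - x)" for n
    define b where "b n = norm (xs - ys' n)" for n
    have key: "norm (xn n - x) \<le> b n + sqrt (2*(a n*b n + \<epsilon> n + (b n)^2/2 + (a n)^2/2))" for n
    proof (rule realB[where w="norm (w n)"])
      have mono: "monotone_op (T n)" using assms(1)[of n] unfolding maximal_monotone_def by blast
      have "0 \<le> blinfun_apply (ys n - ys' n) (xn n - y n)"
      proof -
        have h: "\<And>p ps q qs. (p,ps) \<in> T n \<Longrightarrow> (q,qs) \<in> T n \<Longrightarrow> 0 \<le> blinfun_apply (ps - qs) (p - q)"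
          using mono unfolding monotone_op_def by blast
        show ?thesis using h[of "xn n" "ys n" "y n" "ys' n"] ys[of n] yy(1)[of n] by blast
      qed
      moreover have e1: "ys n - ys' n = (xs - ys' n) - w n" unfolding w_def by simp
      moreover have e2: "xn n - y n = (xn n - x) - (y n - x)" by simp
      ultimately have m: "0 \<le> blinfun_apply ((xs - ys' n) - w n) ((xn n - x) - (y n - x))"
        by (simp only: e1 e2)
      have "blinfun_apply ((xs - ys' n) - w n) ((xn n - x) - (y n - x)) =
          blinfun_apply (xs - ys' n) (xn n - x) - blinfun_apply (xs - ys' n) (y n - x)
          - blinfun_apply (w n) (xn n - x) + blinfun_apply (w n) (y n - x)"
        unfolding blinfun.diff_left blinfun.diff_right by linarith
      with m have "blinfun_apply (w n) (xn n - x) \<le> blinfun_apply (xs - ys' n) (xn n - x)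
          - blinfun_apply (xs - ys' n) (y n - x) + blinfun_apply (w n) (y n - x)" by linarith
      moreover have "blinfun_apply (xs - ys' n) (xn n - x) \<le> b n * norm (xn n - x)"
        unfolding b_def by (rule bl_le)
      moreover have "- blinfun_apply (xs - ys' n) (y n - x) \<le> b n * a n"
        using norm_blinfun[of "xs - ys' n" "y n - x"] unfolding a_def b_def by simp
      moreover have "blinfun_apply (w n) (y n - x) \<le> norm (w n) * a n"
        unfolding a_def by (rule bl_le)
      ultimately show "(1/2)*(norm (xn n - x))^2 + (1/2)*(norm (w n))^2
          \<le> b n * norm (xn n - x) + b n * a n + norm (w n) * a n + \<epsilon> n"
        using J[of n] by linarith
    qed
    have a0: "a \<longlonglongrightarrow> 0" unfolding a_def using yy(2)
      by (metis LIM_zero tendsto_norm_zero)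
    have "(\<lambda>n. norm (ys' n - xs)) \<longlonglongrightarrow> 0"
      using LIM_zero[OF yy(3)] by (rule tendsto_norm_zero)
    hence b0: "b \<longlonglongrightarrow> 0" unfolding b_def by (simp add: norm_minus_commute)
    have "(\<lambda>n. b n + sqrt (2*(a n*b n + \<epsilon> n + (b n)^2/2 + (a n)^2/2))) \<longlonglongrightarrow>
          0 + sqrt (2*(0*0 + 0 + 0^2/2 + 0^2/2))"
      by (intro tendsto_intros a0 b0 assms(4)) auto
    hence "(\<lambda>n. xn n - x) \<longlonglongrightarrow> 0"
      using Lim_null_comparison[OF always_eventually[OF allI[OF key]]] by simp
    thus "xn \<longlonglongrightarrow> x" by (simp add: LIM_zero_iff)
  next
    assume xc: "xn \<longlonglongrightarrow> x"
    define d where "d n = norm (xn n - x)" for n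
    have key: "norm (w n) \<le> d n + sqrt (2 * \<epsilon> n)" for n
    proof (rule realA)
      have "blinfun_apply (w n) (xn n - x) \<le> norm (w n) * d n" unfolding d_def by (rule bl_le)
      thus "(1/2)*(d n)^2 + (1/2)*(norm (w n))^2 \<le> norm (w n) * d n + \<epsilon> n"
        using J[of n] unfolding d_def by linarith
    qed
    have d0: "d \<longlonglongrightarrow> 0" unfolding d_def using xc by (metis LIM_zero tendsto_norm_zero)
    have "(\<lambda>n. d n + sqrt (2 * \<epsilon> n)) \<longlonglongrightarrow> 0 + sqrt (2*0)"
      by (intro tendsto_intros d0 assms(4))
    hence "w \<longlonglongrightarrow> 0"
      using Lim_null_comparison[OF always_eventually[OF allI[OF key]]] by simp
    hence "(\<lambda>n. xs - w n) \<longlonglongrightarrow> xs - 0" by (intro tendsto_intros)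
    hence "ys \<longlonglongrightarrow> xs" unfolding w_def by simp
    thus "(x, xs) \<in> liminf_op T" unfolding liminf_op_def using ys xc by blast
  qed
qed

end
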